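(* For $\omega>0$ small and any $h$ in the Schwartz space $\mathcal{S}(\mathbb{R})$, \[ \int(2yh'+h)Kh=4\int(h'')^2+4\int(h')^2+\int Y_1(h')^2+\int Y_0h^2, \] where $Y_1=-2K_2-yK_2'+2yK_1$ and $Y_0=\tfrac12(K_2''-K_1'-2yK_0')$, and these satisfy $|\partial_y^kY_1|+|\partial_y^kY_0|\lesssim\omega e^{-|y|}$ on $\mathbb{R}$ for all $k\ge0$.
   Context: Let $Q_\omega(y)=\sqrt{4/(1+a_\omega\cosh 2y)}$, $a_\omega=\sqrt{1+\tfrac{16}{3}\omega}$, $M_+=-\partial_y^2+1+\tfrac{\omega}{3}Q_\omega^4$, $M_-=-\partial_y^2+1-\omega Q_\omega^4$. For small $\omega>0$, $\alpha=\alpha(\omega)>0$ is smooth with $\alpha=\tfrac89\omega+O(\omega^2)$, $\lambda=1-\alpha^2$, $\kappa=\sqrt{2-\alpha^2}$, and $W_1,W_2$ are smooth real functions, even in $y$, with $M_+W_1=\lambda W_2$, $M_-W_2=\lambda W_1$, and for $j=1,2$, $k\ge0$: $|\partial_y^kW_j|\lesssim\omega^ke^{-\alpha|y|}+\omega e^{-|y|}$, $|\partial_y^k(W_1-W_2)|\lesssim\omega e^{-\kappa|y|}$, $|W_j-e^{-\alpha|y|}|\lesssim\omega e^{-\alpha|y|}$. With $U=\partial_y-W_2'/W_2$, the operator $K=\partial_y^4-2\partial_y^2+K_2\partial_y^2+K_1\partial_y+K_0+1$ is the fourth-order differential operator (with smooth coefficients $K_2,K_1,K_0$ uniquely determined)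 satisfying $UM_+M_-=KU$; its coefficients satisfy $|\partial_y^kK_i|\lesssim\omega e^{-(\kappa-\alpha)|y|}$. $\lesssim$ means $\le C\,\cdot$ with $C$ independent of $\omega,y$. *)

theory Defs
  imports "HOL-Analysis.Analysis"
begin

definition nderiv :: "nat \<Rightarrow> (real \<Rightarrow> real) \<Rightarrow> real \<Rightarrow> real" where
  "nderiv k f = (deriv ^^ k) f"

definition smooth_fun :: "(real \<Rightarrow> real) \<Rightarrow> bool" where
  "smooth_fun f \<longleftrightarrow> (\<forall>k x. nderiv k f differentiable (at x))"

definition schwartz :: "(real \<Rightarrow> real) \<Rightarrow> bool" where
  "schwartz h \<longleftrightarrow> smooth_fun h \<and>
     (\<forall>j k. \<exists>C. \<forall>y. \<bar>y\<bar> ^ j * \<bar>nderiv k h y\<bar> \<le> C)"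

definition a_om :: "real \<Rightarrow> real" where
  "a_om \<omega> = sqrt (1 + 16/3 * \<omega>)"

definition Q_om :: "real \<Rightarrow> real \<Rightarrow> real" where
  "Q_om \<omega> y = sqrt (4 / (1 + a_om \<omega> * cosh (2 * y)))"

definition M_plus :: "real \<Rightarrow> (real \<Rightarrow> real) \<Rightarrow> real \<Rightarrow> real" where
  "M_plus \<omega> f y = - nderiv 2 f y + f y + \<omega> / 3 * (Q_om \<omega> y) ^ 4 * f y"

definition M_minus :: "real \<Rightarrow> (real \<Rightarrow> real) \<Rightarrow> real \<Rightarrow> real" where
  "M_minus \<omega> f y = - nderiv 2 f y + f y - \<omega> * (Q_om \<omega> y) ^ 4 * f y"

definition U_op :: "(real \<Rightarrow> real) \<Rightarrow> (real \<Rightarrow> real) \<Rightarrow> real \<Rightarrow> real" where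
  "U_op W2 f y = deriv f y - deriv W2 y / W2 y * f y"

definition K_op :: "(real \<Rightarrow> real) \<Rightarrow> (real \<Rightarrow> real) \<Rightarrow> (real \<Rightarrow> real)
                     \<Rightarrow> (real \<Rightarrow> real) \<Rightarrow> real \<Rightarrow> real" where
  "K_op K2 K1 K0 f y = nderiv 4 f y - 2 * nderiv 2 f y + K2 y * nderiv 2 f y
      + K1 y * deriv f y + K0 y * f y + f y"

end

theory Submission imports Defs "HOL-Probability.Sinc_Integral" "HOL-Real_Asymp.Real_Asymp" begin

lemma nderiv_0[simp]: "nderiv 0 f = f" by (simp add: nderiv_def)
lemma nderiv_Suc: "nderiv (Suc k) f = deriv (nderiv k f)" by (simp add: nderiv_def)
lemma deriv_nderiv1: "deriv f = nderiv 1 f" by (simp add: nderiv_def)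

lemma smooth_DERIV0: "smooth_fun f \<Longrightarrow> (nderiv k f has_real_derivative nderiv (Suc k) f x) (at x)"
  unfolding smooth_fun_def nderiv_Suc by (simp add: DERIV_deriv_iff_real_differentiable)

lemma DERIV_nderiv[derivative_intros]:
  assumes "smooth_fun f" "(g has_real_derivative g') (at x within s)"
  shows "((\<lambda>y. nderiv k f (g y)) has_real_derivative nderiv (Suc k) f (g x) * g') (at x within s)"
  using DERIV_chain2[OF smooth_DERIV0[OF assms(1)] assms(2)] by simp

lemma smooth_cont: "smooth_fun f \<Longrightarrow> continuous_on UNIV (nderiv k f)"
  unfolding smooth_fun_def
  by (meson continuous_at_imp_continuous_on differentiable_imp_continuous_within)

lemma nderiv_chain:
  assumes "g 0 = f" "\<And>k x. (g k has_real_derivative g (Suc k) x) (at x)"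
  shows "nderiv k f = g k"
proof (induction k)
  case 0 then show ?case using assms by simp
next
  case (Suc k)
  show ?case unfolding nderiv_Suc Suc using assms(2) DERIV_imp_deriv by (intro ext) blast
qed

definition rapid :: "(real \<Rightarrow> real) \<Rightarrow> bool" where
  "rapid f \<longleftrightarrow> continuous_on UNIV f \<and> (\<forall>n. \<exists>C. \<forall>y. (1 + \<bar>y\<bar>) ^ n * \<bar>f y\<bar> \<le> C)"

definition tempered :: "(real \<Rightarrow> real) \<Rightarrow> bool" where
  "tempered f \<longleftrightarrow> continuous_on UNIV f \<and> (\<exists>B n. \<forall>y. \<bar>f y\<bar> \<le> B * (1 + \<bar>y\<bar>) ^ n)"

lemma one_plus_pow_le: "(1 + \<bar>y::real\<bar>) ^ n \<le> 2 ^ n * (1 + \<bar>y\<bar> ^ n)"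
proof (cases "\<bar>y\<bar> \<le> 1")
  case True
  have "(1 + \<bar>y\<bar>) ^ n \<le> 2 ^ n" using True by (intro power_mono) auto
  also have "\<dots> \<le> 2 ^ n * (1 + \<bar>y\<bar> ^ n)" by simp
  finally show ?thesis .
next
  case False
  have "(1 + \<bar>y\<bar>) ^ n \<le> (2 * \<bar>y\<bar>) ^ n" using False by (intro power_mono) auto
  also have "\<dots> \<le> 2 ^ n * (1 + \<bar>y\<bar> ^ n)" by (simp add: power_mult_distrib)
  finally show ?thesis .
qed

lemma schwartz_rapid:
  assumes "schwartz h" shows "rapid (nderiv k h)"
  unfolding rapid_def
proof (intro conjI allI)
  show "continuous_on UNIV (nderiv k h)" using assms smooth_cont schwartz_def by blast
  fix n
  obtain C0 where C0: "\<And>y. \<bar>y\<bar> ^ 0 * \<bar>nderiv k h y\<bar> \<le> C0" using assms unfolding schwartz_def by blast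
  obtain Cn where Cn: "\<And>y. \<bar>y\<bar> ^ n * \<bar>nderiv k h y\<bar> \<le> Cn" using assms unfolding schwartz_def by blast
  show "\<exists>C. \<forall>y. (1 + \<bar>y\<bar>) ^ n * \<bar>nderiv k h y\<bar> \<le> C"
  proof (intro exI allI)
    fix y
    have "(1 + \<bar>y\<bar>) ^ n * \<bar>nderiv k h y\<bar> \<le> 2 ^ n * (1 + \<bar>y\<bar> ^ n) * \<bar>nderiv k h y\<bar>"
      by (intro mult_right_mono one_plus_pow_le) auto
    also have "\<dots> = 2 ^ n * (\<bar>y\<bar> ^ 0 * \<bar>nderiv k h y\<bar> + \<bar>y\<bar> ^ n * \<bar>nderiv k h y\<bar>)"
      by (simp add: algebra_simps)
    also have "\<dots> \<le> 2 ^ n * (C0 + Cn)" using C0[of y] Cn[of y] by (intro mult_left_mono) auto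
    finally show "(1 + \<bar>y\<bar>) ^ n * \<bar>nderiv k h y\<bar> \<le> 2 ^ n * (C0 + Cn)" .
  qed
qed

lemma schwartz_rapid0: "schwartz h \<Longrightarrow> rapid h"
  using schwartz_rapid[of h 0] by simp

lemma rapid_tempered: "rapid f \<Longrightarrow> tempered f"
  unfolding rapid_def tempered_def by (metis power_0 mult_1 mult.commute)

lemma tempered_mult[intro]:
  assumes "tempered f" "tempered g" shows "tempered (\<lambda>y. f y * g y)"
proof -
  obtain B n where B: "\<And>y. \<bar>f y\<bar> \<le> B * (1 + \<bar>y\<bar>) ^ n" using assms unfolding tempered_def by blast
  obtain B' m where B': "\<And>y. \<bar>g y\<bar> \<le> B' * (1 + \<bar>y\<bar>) ^ m" using assms unfolding tempered_def by blast
  have "\<bar>f y * g y\<bar> \<le> (B * B') * (1 + \<bar>y\<bar>) ^ (n + m)" for y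
  proof -
    have "\<bar>f y * g y\<bar> = \<bar>f y\<bar> * \<bar>g y\<bar>" by (simp add: abs_mult)
    also have "\<dots> \<le> (B * (1 + \<bar>y\<bar>) ^ n) * (B' * (1 + \<bar>y\<bar>) ^ m)"
      using B[of y] B'[of y] by (intro mult_mono) auto
    finally show ?thesis by (simp add: power_add algebra_simps)
  qed
  moreover have "continuous_on UNIV (\<lambda>y. f y * g y)"
    using assms unfolding tempered_def by (intro continuous_intros) auto
  ultimately show ?thesis unfolding tempered_def by blast
qed

lemma tempered_add[intro]:
  assumes "tempered f" "tempered g" shows "tempered (\<lambda>y. f y + g y)"
proof -
  obtain B n where B: "\<And>y. \<bar>f y\<bar> \<le> B * (1 + \<bar>y\<bar>) ^ n" using assms unfolding tempered_def by blast
  obtain B' m where B': "\<And>y. \<bar>g y\<bar> \<le> B' * (1 + \<bar>y\<bar>) ^ m" using assms unfolding tempered_def by blast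
  have "\<bar>f y + g y\<bar> \<le> (\<bar>B\<bar> + \<bar>B'\<bar>) * (1 + \<bar>y\<bar>) ^ (n + m)" for y
  proof -
    have p1: "(1 + \<bar>y\<bar>) ^ n \<le> (1 + \<bar>y\<bar>) ^ (n + m)" by (intro power_increasing) auto
    have p2: "(1 + \<bar>y\<bar>) ^ m \<le> (1 + \<bar>y\<bar>) ^ (n + m)" by (intro power_increasing) auto
    have "\<bar>f y + g y\<bar> \<le> \<bar>f y\<bar> + \<bar>g y\<bar>" by simp
    also have "\<dots> \<le> \<bar>B\<bar> * (1 + \<bar>y\<bar>) ^ (n + m) + \<bar>B'\<bar> * (1 + \<bar>y\<bar>) ^ (n + m)"
    proof (intro add_mono)
      have "\<bar>f y\<bar> \<le> \<bar>B\<bar> * (1 + \<bar>y\<bar>) ^ n" using B[of y] by (smt (verit) mult_right_mono zero_le_power abs_ge_zero)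
      also have "\<dots> \<le> \<bar>B\<bar> * (1 + \<bar>y\<bar>) ^ (n + m)" using p1 by (intro mult_left_mono) auto
      finally show "\<bar>f y\<bar> \<le> \<bar>B\<bar> * (1 + \<bar>y\<bar>) ^ (n + m)" .
      have "\<bar>g y\<bar> \<le> \<bar>B'\<bar> * (1 + \<bar>y\<bar>) ^ m" using B'[of y] by (smt (verit) mult_right_mono zero_le_power abs_ge_zero)
      also have "\<dots> \<le> \<bar>B'\<bar> * (1 + \<bar>y\<bar>) ^ (n + m)" using p2 by (intro mult_left_mono) auto
      finally show "\<bar>g y\<bar> \<le> \<bar>B'\<bar> * (1 + \<bar>y\<bar>) ^ (n + m)" .
    qed
    finally show ?thesis by (simp add: algebra_simps)
  qed
  moreover have "continuous_on UNIV (\<lambda>y. f y + g y)"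
    using assms unfolding tempered_def by (intro continuous_intros) auto
  ultimately show ?thesis unfolding tempered_def by blast
qed

lemma tempered_const[intro]: "tempered (\<lambda>y. c)"
  unfolding tempered_def by (intro conjI continuous_intros exI[of _ "\<bar>c\<bar>"] exI[of _ 0]) auto

lemma tempered_id[intro]: "tempered (\<lambda>y. y)"
  unfolding tempered_def by (intro conjI continuous_intros exI[of _ 1] exI[of _ 1]) auto

lemma tempered_minus[intro]: "tempered f \<Longrightarrow> tempered (\<lambda>y. - f y)"
  using tempered_mult[OF tempered_const[of "-1"]] by simp

lemma tempered_diff[intro]: "tempered f \<Longrightarrow> tempered g \<Longrightarrow> tempered (\<lambda>y. f y - g y)"
  using tempered_add[of f "\<lambda>y. - g y"] by auto

lemma rapid_tmult:
  assumes "tempered g" "rapid f" shows "rapid (\<lambda>y. g y * f y)"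
  unfolding rapid_def
proof (intro conjI allI)
  show "continuous_on UNIV (\<lambda>y. g y * f y)"
    using assms unfolding tempered_def rapid_def by (intro continuous_intros) auto
  fix k
  obtain B n where B: "\<And>y. \<bar>g y\<bar> \<le> B * (1 + \<bar>y\<bar>) ^ n" using assms unfolding tempered_def by blast
  obtain C where C: "\<And>y. (1 + \<bar>y\<bar>) ^ (k + n) * \<bar>f y\<bar> \<le> C" using assms unfolding rapid_def by blast
  show "\<exists>C. \<forall>y. (1 + \<bar>y\<bar>) ^ k * \<bar>g y * f y\<bar> \<le> C"
  proof (intro exI allI)
    fix y
    have "(1 + \<bar>y\<bar>) ^ k * \<bar>g y * f y\<bar> = \<bar>g y\<bar> * ((1 + \<bar>y\<bar>) ^ k * \<bar>f y\<bar>)" by (simp add: abs_mult)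
    also have "\<dots> \<le> (\<bar>B\<bar> * (1 + \<bar>y\<bar>) ^ n) * ((1 + \<bar>y\<bar>) ^ k * \<bar>f y\<bar>)"
      using B[of y] by (intro mult_right_mono) (auto simp: abs_mult intro: order_trans abs_ge_self)
    also have "\<dots> = \<bar>B\<bar> * ((1 + \<bar>y\<bar>) ^ (k + n) * \<bar>f y\<bar>)" by (simp add: power_add algebra_simps)
    also have "\<dots> \<le> \<bar>B\<bar> * C" using C[of y] by (intro mult_left_mono) auto
    finally show "(1 + \<bar>y\<bar>) ^ k * \<bar>g y * f y\<bar> \<le> \<bar>B\<bar> * C" .
  qed
qed

lemma rapid_add:
  assumes "rapid f" "rapid g" shows "rapid (\<lambda>y. f y + g y)"
  unfolding rapid_def
proof (intro conjI allI)
  show "continuous_on UNIV (\<lambda>y. f y + g y)"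
    using assms unfolding rapid_def by (intro continuous_intros) auto
  fix k
  obtain C where C: "\<And>y. (1 + \<bar>y\<bar>) ^ k * \<bar>f y\<bar> \<le> C" using assms unfolding rapid_def by blast
  obtain D where D: "\<And>y. (1 + \<bar>y\<bar>) ^ k * \<bar>g y\<bar> \<le> D" using assms unfolding rapid_def by blast
  show "\<exists>C. \<forall>y. (1 + \<bar>y\<bar>) ^ k * \<bar>f y + g y\<bar> \<le> C"
  proof (intro exI allI)
    fix y
    have "(1 + \<bar>y\<bar>) ^ k * \<bar>f y + g y\<bar> \<le> (1 + \<bar>y\<bar>) ^ k * (\<bar>f y\<bar> + \<bar>g y\<bar>)"
      by (intro mult_left_mono) auto
    also have "\<dots> \<le> C + D" using C[of y] D[of y] by (simp add: algebra_simps)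
    finally show "(1 + \<bar>y\<bar>) ^ k * \<bar>f y + g y\<bar> \<le> C + D" .
  qed
qed

lemma rapid_diff:
  assumes "rapid f" "rapid g" shows "rapid (\<lambda>y. f y - g y)"
  using rapid_add[OF assms(1) rapid_tmult[OF tempered_const[of "-1"] assms(2)]] by simp

lemma rapid_mult:
  assumes "rapid f" "tempered g" shows "rapid (\<lambda>y. f y * g y)"
  using rapid_tmult[OF assms(2,1)] by (simp add: mult.commute)

lemma rapid_integrable:
  assumes "rapid f" shows "integrable lborel f"
proof -
  obtain C where C: "\<And>y. (1 + \<bar>y\<bar>) ^ 2 * \<bar>f y\<bar> \<le> C" using assms unfolding rapid_def by blast
  have i: "integrable lborel (\<lambda>x::real. inverse (1 + x^2))"
    using integrable_inverse_1_plus_square unfolding set_integrable_def einterval_eq_UNIV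
    by (simp add: indicator_def cong del: if_weak_cong)
  show ?thesis
  proof (rule Bochner_Integration.integrable_bound[OF integrable_mult_right[OF i, of C]])
    show "f \<in> borel_measurable lborel"
      using assms unfolding rapid_def by (simp add: borel_measurable_continuous_onI)
    show "AE x in lborel. norm (f x) \<le> norm (C * inverse (1 + x\<^sup>2))"
    proof (intro AE_I2)
      fix x :: real
      have p: "0 < 1 + x^2" by (simp add: add_pos_nonneg)
      have "(1 + x^2) * \<bar>f x\<bar> \<le> (1 + \<bar>x\<bar>) ^ 2 * \<bar>f x\<bar>"
        by (intro mult_right_mono) (auto simp: power2_eq_square algebra_simps)
      also have "\<dots> \<le> C" by (rule C)
      finally have "\<bar>f x\<bar> \<le> C * inverse (1 + x^2)" using p by (simp add: field_simps)
      then show "norm (f x) \<le> norm (C * inverse (1 + x\<^sup>2))" by auto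
    qed
  qed
qed

lemma rapid_tendsto:
  assumes "rapid f" shows "(f \<longlongrightarrow> 0) at_top" "(f \<longlongrightarrow> 0) at_bot"
proof -
  obtain C where C: "\<And>y. (1 + \<bar>y\<bar>) ^ 1 * \<bar>f y\<bar> \<le> C" using assms unfolding rapid_def by blast
  have b: "norm (f y) \<le> C / (1 + \<bar>y\<bar>)" for y
    using C[of y] by (simp add: field_simps)
  have "((\<lambda>y. C / (1 + \<bar>y\<bar>)) \<longlongrightarrow> 0) at_top" by real_asymp
  then show "(f \<longlongrightarrow> 0) at_top" by (rule Lim_null_comparison[rotated]) (intro always_eventually allI, use b in auto)
  have "((\<lambda>y. C / (1 + \<bar>y\<bar>)) \<longlongrightarrow> 0) at_bot" by real_asymp
  then show "(f \<longlongrightarrow> 0) at_bot" by (rule Lim_null_comparison[rotated]) (intro always_eventually allI, use b in auto)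
qed

lemma integral_deriv_zero:
  assumes "\<And>x. (F has_real_derivative f x) (at x)" "rapid f" "rapid F"
  shows "integral\<^sup>L lborel f = 0"
proof -
  have "(LBINT x=-\<infinity>..\<infinity>. f x) = 0 - 0"
  proof (rule interval_integral_FTC_integrable)
    show "- \<infinity> < (\<infinity>::ereal)" by simp
    show "(F has_vector_derivative f x) (at x)" for x
      using assms(1) by (simp add: has_real_derivative_iff_has_vector_derivative)
    show "isCont f x" for x using assms(2) unfolding rapid_def
      by (simp add: continuous_on_eq_continuous_at)
    show "set_integrable lborel (einterval (- \<infinity>) \<infinity>) f"
      using rapid_integrable[OF assms(2)] by (simp add: set_integrable_def)
    show "((F \<circ> real_of_ereal) \<longlongrightarrow> 0) (at_right (- \<infinity>))"
      using rapid_tendsto(2)[OF assms(3)] by (simp add: ereal_tendsto_simps)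
    show "((F \<circ> real_of_ereal) \<longlongrightarrow> 0) (at_left \<infinity>)"
      using rapid_tendsto(1)[OF assms(3)] by (simp add: ereal_tendsto_simps)
  qed
  then show ?thesis
    by (simp add: interval_lebesgue_integral_def set_lebesgue_integral_def)
qed



lemma tempered_divide[intro]: "tempered f \<Longrightarrow> tempered (\<lambda>y. f y / c)"
  using tempered_mult[OF _ tempered_const[of "inverse c"], of f] by (simp add: divide_inverse)

lemma smooth_tempered_bd:
  assumes "smooth_fun f" "\<forall>y. \<bar>f y\<bar> \<le> B" shows "tempered f"
  unfolding tempered_def using assms smooth_cont[of f 0]
  by (intro conjI exI[of _ B] exI[of _ 0]) auto

lemma identity:
  fixes h K2 K1 K0 :: "real \<Rightarrow> real"
  assumes h: "schwartz h" and s2: "smooth_fun K2" and s1: "smooth_fun K1" and s0: "smooth_fun K0"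
    and t2: "\<And>k. tempered (nderiv k K2)" and t1: "\<And>k. tempered (nderiv k K1)"
    and t0: "\<And>k. tempered (nderiv k K0)"
  shows "(\<integral>y. (2 * y * deriv h y + h y) * K_op K2 K1 K0 h y \<partial>lborel)
     = 4 * (\<integral>y. (nderiv 2 h y)\<^sup>2 \<partial>lborel) + 4 * (\<integral>y. (deriv h y)\<^sup>2 \<partial>lborel)
       + (\<integral>y. (- 2 * K2 y - y * deriv K2 y + 2 * y * K1 y) * (deriv h y)\<^sup>2 \<partial>lborel)
       + (\<integral>y. ((nderiv 2 K2 y - deriv K1 y - 2 * y * deriv K0 y) / 2) * (h y)\<^sup>2 \<partial>lborel)"
proof -
  have sh: "smooth_fun h" using h unfolding schwartz_def by blast
  have rh: "\<And>k. rapid (nderiv k h)" using schwartz_rapid[OF h] .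
  have rh0: "rapid h" using schwartz_rapid0[OF h] .
  have th: "\<And>k. tempered (nderiv k h)" "tempered h" using rh rh0 rapid_tempered by auto
  have tK: "tempered K2" "tempered K1" "tempered K0" using t2[of 0] t1[of 0] t0[of 0] by auto
  have rt: "\<And>g i j. tempered g \<Longrightarrow> rapid (\<lambda>y. g y * (nderiv i h y * nderiv j h y))"
    by (rule rapid_tmult, assumption, rule rapid_mult[OF rh th(1)])
  have rt2: "\<And>g i. tempered g \<Longrightarrow> rapid (\<lambda>y. g y * (nderiv i h y)\<^sup>2)"
    using rt by (simp add: power2_eq_square)
  have rt0: "\<And>g. tempered g \<Longrightarrow> rapid (\<lambda>y. g y * (h y)\<^sup>2)"
    using rt[of _ 0 0] by (simp add: power2_eq_square)
  have dh: "\<And>g g' x s. (g has_real_derivative g') (at x within s) \<Longrightarrow>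
     ((\<lambda>y. h (g y)) has_real_derivative nderiv 1 h (g x) * g') (at x within s)"
    using DERIV_nderiv[OF sh, of _ _ _ _ 0] by simp
  have d2: "\<And>g g' x s. (g has_real_derivative g') (at x within s) \<Longrightarrow>
     ((\<lambda>y. K2 (g y)) has_real_derivative nderiv 1 K2 (g x) * g') (at x within s)"
    using DERIV_nderiv[OF s2, of _ _ _ _ 0] by simp
  have d1: "\<And>g g' x s. (g has_real_derivative g') (at x within s) \<Longrightarrow>
     ((\<lambda>y. K1 (g y)) has_real_derivative nderiv 1 K1 (g x) * g') (at x within s)"
    using DERIV_nderiv[OF s1, of _ _ _ _ 0] by simp
  have d0: "\<And>g g' x s. (g has_real_derivative g') (at x within s) \<Longrightarrow>
     ((\<lambda>y. K0 (g y)) has_real_derivative nderiv 1 K0 (g x) * g') (at x within s)"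
    using DERIV_nderiv[OF s0, of _ _ _ _ 0] by simp
  define F where "F y = 1 * (h y * nderiv 3 h y) + (-1) * (nderiv 1 h y * nderiv 2 h y)
     + (2 * y) * (nderiv 1 h y * nderiv 3 h y) + (-2) * (nderiv 1 h y * nderiv 2 h y)
     + (- y) * (nderiv 2 h y * nderiv 2 h y) + (-2) * (h y * nderiv 1 h y)
     + (-2 * y) * (nderiv 1 h y * nderiv 1 h y) + y * (h y * h y)
     + (y * K2 y) * (nderiv 1 h y * nderiv 1 h y) + K2 y * (h y * nderiv 1 h y)
     + (- nderiv 1 K2 y / 2 + K1 y / 2 + y * K0 y) * (h y * h y)" for y
  define L where "L y = (2 * y * nderiv 1 h y + h y) * (nderiv 4 h y - 2 * nderiv 2 h y
      + K2 y * nderiv 2 h y + K1 y * nderiv 1 h y + K0 y * h y + h y)" for y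
  define R1 where "R1 y = 4 * (nderiv 2 h y)\<^sup>2" for y
  define R2 where "R2 y = 4 * (nderiv 1 h y)\<^sup>2" for y
  define R3 where "R3 y = (- 2 * K2 y - y * nderiv 1 K2 y + 2 * y * K1 y) * (nderiv 1 h y)\<^sup>2" for y
  define R4 where "R4 y = ((nderiv 2 K2 y - nderiv 1 K1 y - 2 * y * nderiv 1 K0 y) / 2) * (h y)\<^sup>2" for y
  have nd12: "nderiv (Suc 0) = nderiv 1" "nderiv (Suc (Suc 0)) = nderiv 2" "nderiv (Suc 1) = nderiv 2"
    by (simp_all add: numeral_2_eq_2)
  have sucs: "Suc 1 = 2" "Suc 2 = 3" "Suc 3 = 4" by simp_all
  have two_nz: "(2::real) \<noteq> 0" by simp
  have dF: "(F has_real_derivative (L y - (R1 y + R2 y + R3 y + R4 y))) (at y)" for y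
    unfolding F_def[abs_def]
    apply (rule derivative_eq_intros dh d2 d1 d0 sh s2 s1 s0 refl two_nz)+
    apply (unfold sucs L_def R1_def R2_def R3_def R4_def)
    apply (simp add: power2_eq_square algebra_simps)
    apply (simp add: field_simps)
    done
  have rtA: "\<And>g j. tempered g \<Longrightarrow> rapid (\<lambda>y. g y * (h y * nderiv j h y))"
    using rt[of _ 0] by simp
  have rtB: "\<And>g. tempered g \<Longrightarrow> rapid (\<lambda>y. g y * (h y * h y))"
    using rt[of _ 0 0] by simp
  have tK1: "tempered (nderiv 1 K2)" "tempered (nderiv 2 K2)" "tempered (nderiv 1 K1)" "tempered (nderiv 1 K0)"
    using t2 t1 t0 by auto
  have rF: "rapid F"
    unfolding F_def[abs_def]
    by (intro rapid_add rt rtA rtB tempered_add tempered_diff tempered_mult tempered_minus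
        tempered_const tempered_id tempered_divide tK tK1)
  have rL: "rapid L"
    unfolding L_def[abs_def]
    by (intro rapid_mult rapid_add rapid_tmult[OF _ rh] rh0 tempered_add tempered_diff tempered_mult
        tempered_const tempered_id th tK)
  have rR1: "rapid R1" unfolding R1_def[abs_def] by (intro rt2 tempered_const)
  have rR2: "rapid R2" unfolding R2_def[abs_def] by (intro rt2 tempered_const)
  have rR3: "rapid R3" unfolding R3_def[abs_def]
    by (intro rt2 tempered_add tempered_diff tempered_mult tempered_minus
        tempered_const tempered_id tK tK1)
  have rR4: "rapid R4" unfolding R4_def[abs_def]
    by (intro rt0 tempered_add tempered_diff tempered_mult tempered_minus
        tempered_const tempered_id tempered_divide tK tK1)
  have rD: "rapid (\<lambda>y. L y - (R1 y + R2 y + R3 y + R4 y))"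
    by (intro rapid_diff rapid_add rL rR1 rR2 rR3 rR4)
  have z: "integral\<^sup>L lborel (\<lambda>y. L y - (R1 y + R2 y + R3 y + R4 y)) = 0"
    by (rule integral_deriv_zero[OF dF rD rF])
  note ig = rapid_integrable[OF rL] rapid_integrable[OF rR1] rapid_integrable[OF rR2]
    rapid_integrable[OF rR3] rapid_integrable[OF rR4]
  have "integral\<^sup>L lborel L = integral\<^sup>L lborel R1 + integral\<^sup>L lborel R2 + integral\<^sup>L lborel R3 + integral\<^sup>L lborel R4"
    using z ig by (simp add: Bochner_Integration.integral_diff Bochner_Integration.integral_add)
  moreover have "(\<lambda>y. (2 * y * deriv h y + h y) * K_op K2 K1 K0 h y) = L"
    by (intro ext) (simp add: L_def K_op_def deriv_nderiv1)
  moreover have "(\<lambda>y. (- 2 * K2 y - y * deriv K2 y + 2 * y * K1 y) * (deriv h y)\<^sup>2) = R3"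
    by (intro ext) (simp add: R3_def deriv_nderiv1)
  moreover have "(\<lambda>y. ((nderiv 2 K2 y - deriv K1 y - 2 * y * deriv K0 y) / 2) * (h y)\<^sup>2) = R4"
    by (intro ext) (simp add: R4_def deriv_nderiv1)
  moreover have "integral\<^sup>L lborel R1 = 4 * (\<integral>y. (nderiv 2 h y)\<^sup>2 \<partial>lborel)"
    unfolding R1_def by simp
  moreover have "integral\<^sup>L lborel R2 = 4 * (\<integral>y. (deriv h y)\<^sup>2 \<partial>lborel)"
    unfolding R2_def by (simp add: deriv_nderiv1)
  ultimately show ?thesis by simp
qed



lemma tempered_nderiv:
  assumes "smooth_fun f" "\<forall>y. \<bar>nderiv k f y\<bar> \<le> B" shows "tempered (nderiv k f)"
  unfolding tempered_def using assms smooth_cont[of f k]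
  by (intro conjI exI[of _ B] exI[of _ 0]) auto

lemma exp_bounds:
  fixes t y :: real
  assumes "t \<ge> 13/10"
  shows "exp (- t * \<bar>y\<bar>) \<le> exp (- \<bar>y\<bar>)" "\<bar>y\<bar> * exp (- t * \<bar>y\<bar>) \<le> 4 * exp (- \<bar>y\<bar>)"
proof -
  have "1 * \<bar>y\<bar> \<le> t * \<bar>y\<bar>" using assms by (intro mult_right_mono) auto
  then have a: "- t * \<bar>y\<bar> \<le> - \<bar>y\<bar>" by simp
  then show "exp (- t * \<bar>y\<bar>) \<le> exp (- \<bar>y\<bar>)" by simp
  have "\<bar>y\<bar> / 4 \<le> exp (\<bar>y\<bar> / 4)" using exp_ge_add_one_self[of "\<bar>y\<bar>/4"] by linarith
  also have "\<dots> \<le> exp ((t - 1) * \<bar>y\<bar>)"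
  proof -
    have "(1/4) * \<bar>y\<bar> \<le> (t - 1) * \<bar>y\<bar>" using assms by (intro mult_right_mono) auto
    then show ?thesis by simp
  qed
  finally have "\<bar>y\<bar> \<le> 4 * exp ((t - 1) * \<bar>y\<bar>)" by simp
  then have "\<bar>y\<bar> * exp (- t * \<bar>y\<bar>) \<le> 4 * exp ((t - 1) * \<bar>y\<bar>) * exp (- t * \<bar>y\<bar>)"
    by (intro mult_right_mono) auto
  also have "\<dots> = 4 * exp (- \<bar>y\<bar>)" by (simp add: exp_add[symmetric] algebra_simps)
  finally show "\<bar>y\<bar> * exp (- t * \<bar>y\<bar>) \<le> 4 * exp (- \<bar>y\<bar>)" .
qed

lemma term_bounds:
  fixes N y a w t :: real
  assumes "\<bar>N\<bar> \<le> a * w * exp (- t * \<bar>y\<bar>)" "t \<ge> 13/10" "w > 0"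
  shows "\<bar>N\<bar> \<le> a * (w * exp (- \<bar>y\<bar>))" "\<bar>y * N\<bar> \<le> 4 * a * (w * exp (- \<bar>y\<bar>))"
    "a \<ge> 0"
proof -
  have "0 \<le> a * w * exp (- t * \<bar>y\<bar>)" using assms(1) by linarith
  then show a0: "a \<ge> 0" using assms(3) by (simp add: zero_le_mult_iff)
  note e = exp_bounds[OF assms(2), of y]
  have "a * w * exp (- t * \<bar>y\<bar>) \<le> a * w * exp (- \<bar>y\<bar>)"
    using a0 assms(3) e(1) by (intro mult_left_mono) auto
  then show "\<bar>N\<bar> \<le> a * (w * exp (- \<bar>y\<bar>))" using assms(1) by (simp add: mult.assoc)
  have "\<bar>y * N\<bar> = \<bar>y\<bar> * \<bar>N\<bar>" by (simp add: abs_mult)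
  also have "\<dots> \<le> \<bar>y\<bar> * (a * w * exp (- t * \<bar>y\<bar>))" using assms(1) by (intro mult_left_mono) auto
  also have "\<dots> = a * w * (\<bar>y\<bar> * exp (- t * \<bar>y\<bar>))" by simp
  also have "\<dots> \<le> a * w * (4 * exp (- \<bar>y\<bar>))"
    using a0 assms(3) e(2) by (intro mult_left_mono) auto
  finally show "\<bar>y * N\<bar> \<le> 4 * a * (w * exp (- \<bar>y\<bar>))" by simp
qed

lemma lin_bound:
  fixes a b c d e p q r s Xa Xb Xc Xd Xe Xp Xq Xr Xs :: real
  assumes "\<bar>a\<bar> \<le> Xa" "\<bar>b\<bar> \<le> Xb" "\<bar>c\<bar> \<le> Xc" "\<bar>d\<bar> \<le> Xd" "\<bar>e\<bar> \<le> Xe"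
    "\<bar>p\<bar> \<le> Xp" "\<bar>q\<bar> \<le> Xq" "\<bar>r\<bar> \<le> Xr" "\<bar>s\<bar> \<le> Xs"
  shows "\<bar>- 2 * a - (b + c) + 2 * (d + e)\<bar> + \<bar>(p - q - 2 * (r + s)) / 2\<bar>
     \<le> (2 * Xa + Xb + Xc + 2 * Xd + 2 * Xe) + (Xp + Xq + 2 * Xr + 2 * Xs) / 2"
proof -
  have h1: "\<bar>- 2 * a - (b + c) + 2 * (d + e)\<bar> \<le> 2 * Xa + Xb + Xc + 2 * Xd + 2 * Xe"
    using assms by (auto simp: abs_le_iff)
  have h2: "\<bar>(p - q - 2 * (r + s)) / 2\<bar> \<le> (Xp + Xq + 2 * Xr + 2 * Xs) / 2"
    using assms by (auto simp: abs_le_iff)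
  show ?thesis using h1 h2 by linarith
qed

theorem lemma4:
  fixes \<omega>0 :: real
    and \<alpha> :: "real \<Rightarrow> real"
    and W1 W2 K2 K1 K0 :: "real \<Rightarrow> real \<Rightarrow> real"
  assumes om0: "\<omega>0 > 0"
    and alpha_pos: "\<forall>\<omega>\<in>{0<..<\<omega>0}. \<alpha> \<omega> > 0"
    and alpha_smooth: "\<forall>k. \<forall>\<omega>\<in>{0<..<\<omega>0}. nderiv k \<alpha> differentiable (at \<omega>)"
    and alpha_asym: "\<exists>C. \<forall>\<omega>\<in>{0<..<\<omega>0}. \<bar>\<alpha> \<omega> - 8/9 * \<omega>\<bar> \<le> C * \<omega>\<^sup>2"
    and W_smooth: "\<forall>\<omega>\<in>{0<..<\<omega>0}. smooth_fun (W1 \<omega>) \<and> smooth_fun (W2 \<omega>)"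
    and W_even: "\<forall>\<omega>\<in>{0<..<\<omega>0}. \<forall>y. W1 \<omega> (-y) = W1 \<omega> y \<and> W2 \<omega> (-y) = W2 \<omega> y"
    and W_eq1: "\<forall>\<omega>\<in>{0<..<\<omega>0}. \<forall>y.
                  M_plus \<omega> (W1 \<omega>) y = (1 - (\<alpha> \<omega>)\<^sup>2) * W2 \<omega> y"
    and W_eq2: "\<forall>\<omega>\<in>{0<..<\<omega>0}. \<forall>y.
                  M_minus \<omega> (W2 \<omega>) y = (1 - (\<alpha> \<omega>)\<^sup>2) * W1 \<omega> y"
    and W_bd: "\<forall>k. \<exists>C. \<forall>\<omega>\<in>{0<..<\<omega>0}. \<forall>y.
                  \<bar>nderiv k (W1 \<omega>) y\<bar> \<le> C * (\<omega> ^ k * exp (- \<alpha> \<omega> * \<bar>y\<bar>) + \<omega> * exp (- \<bar>y\<bar>)) \<and>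
                  \<bar>nderiv k (W2 \<omega>) y\<bar> \<le> C * (\<omega> ^ k * exp (- \<alpha> \<omega> * \<bar>y\<bar>) + \<omega> * exp (- \<bar>y\<bar>))"
    and W_diff_bd: "\<forall>k. \<exists>C. \<forall>\<omega>\<in>{0<..<\<omega>0}. \<forall>y.
                  \<bar>nderiv k (\<lambda>y. W1 \<omega> y - W2 \<omega> y) y\<bar>
                    \<le> C * \<omega> * exp (- sqrt (2 - (\<alpha> \<omega>)\<^sup>2) * \<bar>y\<bar>)"
    and W_exp_bd: "\<exists>C. \<forall>\<omega>\<in>{0<..<\<omega>0}. \<forall>y.
                  \<bar>W1 \<omega> y - exp (- \<alpha> \<omega> * \<bar>y\<bar>)\<bar> \<le> C * \<omega> * exp (- \<alpha> \<omega> * \<bar>y\<bar>) \<and>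
                  \<bar>W2 \<omega> y - exp (- \<alpha> \<omega> * \<bar>y\<bar>)\<bar> \<le> C * \<omega> * exp (- \<alpha> \<omega> * \<bar>y\<bar>)"
    and K_smooth: "\<forall>\<omega>\<in>{0<..<\<omega>0}.
                  smooth_fun (K2 \<omega>) \<and> smooth_fun (K1 \<omega>) \<and> smooth_fun (K0 \<omega>)"
    and K_intertwine: "\<forall>\<omega>\<in>{0<..<\<omega>0}. \<forall>f. smooth_fun f \<longrightarrow>
                  U_op (W2 \<omega>) (M_plus \<omega> (M_minus \<omega> f))
                    = K_op (K2 \<omega>) (K1 \<omega>) (K0 \<omega>) (U_op (W2 \<omega>) f)"
    and K_bd: "\<forall>k. \<exists>C. \<forall>\<omega>\<in>{0<..<\<omega>0}. \<forall>y.
                  \<bar>nderiv k (K2 \<omega>) y\<bar> \<le> C * \<omega> * exp (- (sqrt (2 - (\<alpha> \<omega>)\<^sup>2) - \<alpha> \<omega>) * \<bar>y\<bar>) \<and>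
                  \<bar>nderiv k (K1 \<omega>) y\<bar> \<le> C * \<omega> * exp (- (sqrt (2 - (\<alpha> \<omega>)\<^sup>2) - \<alpha> \<omega>) * \<bar>y\<bar>) \<and>
                  \<bar>nderiv k (K0 \<omega>) y\<bar> \<le> C * \<omega> * exp (- (sqrt (2 - (\<alpha> \<omega>)\<^sup>2) - \<alpha> \<omega>) * \<bar>y\<bar>)"
  defines "Y1 \<equiv> \<lambda>\<omega> y. - 2 * K2 \<omega> y - y * deriv (K2 \<omega>) y + 2 * y * K1 \<omega> y"
    and "Y0 \<equiv> \<lambda>\<omega> y. (nderiv 2 (K2 \<omega>) y - deriv (K1 \<omega>) y - 2 * y * deriv (K0 \<omega>) y) / 2"
  shows "\<exists>\<omega>1>0. (\<forall>\<omega>\<in>{0<..<\<omega>1}. \<forall>h. schwartz h \<longrightarrow>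
            (\<integral>y. (2 * y * deriv h y + h y) * K_op (K2 \<omega>) (K1 \<omega>) (K0 \<omega>) h y \<partial>lborel)
              = 4 * (\<integral>y. (nderiv 2 h y)\<^sup>2 \<partial>lborel) + 4 * (\<integral>y. (deriv h y)\<^sup>2 \<partial>lborel)
                + (\<integral>y. Y1 \<omega> y * (deriv h y)\<^sup>2 \<partial>lborel) + (\<integral>y. Y0 \<omega> y * (h y)\<^sup>2 \<partial>lborel))
         \<and> (\<forall>k. \<exists>C. \<forall>\<omega>\<in>{0<..<\<omega>1}. \<forall>y.
              \<bar>nderiv k (Y1 \<omega>) y\<bar> + \<bar>nderiv k (Y0 \<omega>) y\<bar> \<le> C * \<omega> * exp (- \<bar>y\<bar>))"
proof -
  obtain Ca where Ca: "\<forall>\<omega>\<in>{0<..<\<omega>0}. \<bar>\<alpha> \<omega> - 8/9 * \<omega>\<bar> \<le> Ca * \<omega>\<^sup>2"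
    using alpha_asym by blast
  obtain Cf where Cf: "\<And>k \<omega> y. \<omega>\<in>{0<..<\<omega>0} \<Longrightarrow>
                  \<bar>nderiv k (K2 \<omega>) y\<bar> \<le> Cf k * \<omega> * exp (- (sqrt (2 - (\<alpha> \<omega>)\<^sup>2) - \<alpha> \<omega>) * \<bar>y\<bar>) \<and>
                  \<bar>nderiv k (K1 \<omega>) y\<bar> \<le> Cf k * \<omega> * exp (- (sqrt (2 - (\<alpha> \<omega>)\<^sup>2) - \<alpha> \<omega>) * \<bar>y\<bar>) \<and>
                  \<bar>nderiv k (K0 \<omega>) y\<bar> \<le> Cf k * \<omega> * exp (- (sqrt (2 - (\<alpha> \<omega>)\<^sup>2) - \<alpha> \<omega>) * \<bar>y\<bar>)"
    using K_bd by metis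
  define \<omega>1 where "\<omega>1 = min \<omega>0 (min (1/10) (1 / (10 * (\<bar>Ca\<bar> + 1))))"
  have \<omega>1_pos: "\<omega>1 > 0" unfolding \<omega>1_def using om0 by (simp add: add_pos_nonneg)
  have in0: "\<omega> \<in> {0<..<\<omega>0}" if "\<omega> \<in> {0<..<\<omega>1}" for \<omega>
    using that unfolding \<omega>1_def by auto
  have tbig: "sqrt (2 - (\<alpha> \<omega>)\<^sup>2) - \<alpha> \<omega> \<ge> 13/10" if w: "\<omega> \<in> {0<..<\<omega>1}" for \<omega>
  proof -
    have w0: "\<omega> \<in> {0<..<\<omega>0}" using in0[OF w] .
    have m1: "\<omega>1 \<le> 1/10" "\<omega>1 \<le> 1 / (10 * (\<bar>Ca\<bar> + 1))" unfolding \<omega>1_def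
      by (rule order_trans[OF min.cobounded2 min.cobounded1], rule order_trans[OF min.cobounded2 min.cobounded2])
    have wp: "\<omega> > 0" "\<omega> \<le> 1/10" "\<omega> \<le> 1 / (10 * (\<bar>Ca\<bar> + 1))" using w m1 by auto
    have "\<bar>Ca\<bar> * \<omega> \<le> \<bar>Ca\<bar> * (1 / (10 * (\<bar>Ca\<bar> + 1)))" using wp by (intro mult_left_mono) auto
    also have "\<dots> \<le> 1/10" by (simp add: field_simps)
    finally have c1: "\<bar>Ca\<bar> * \<omega> \<le> 1/10" .
    have "Ca * \<omega>\<^sup>2 \<le> (\<bar>Ca\<bar> * \<omega>) * \<omega>" using wp(1) by (simp add: power2_eq_square mult.assoc mult_right_mono)
    also have "\<dots> \<le> (1/10) * (1/10)" using c1 wp by (intro mult_mono) auto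
    finally have c2: "Ca * \<omega>\<^sup>2 \<le> 1/100" by simp
    have ap: "\<alpha> \<omega> > 0" using alpha_pos w0 by blast
    have "\<alpha> \<omega> \<le> 8/9 * \<omega> + Ca * \<omega>\<^sup>2" using Ca w0 by force
    then have a1: "\<alpha> \<omega> \<le> 1/10" using c2 wp by linarith
    have "(\<alpha> \<omega>)\<^sup>2 \<le> (1/10)^2" using ap a1 by (intro power_mono) auto
    then have "(14/10)^2 \<le> 2 - (\<alpha> \<omega>)\<^sup>2" by (simp add: power2_eq_square)
    then have "14/10 \<le> sqrt (2 - (\<alpha> \<omega>)\<^sup>2)" by (rule real_le_rsqrt)
    then show ?thesis using a1 by linarith
  qed
  define A where "A k = \<bar>Cf k\<bar>" for k
  have Kb: "\<bar>nderiv k (K2 \<omega>) y\<bar> \<le> A k * \<omega> * exp (- (sqrt (2 - (\<alpha> \<omega>)\<^sup>2) - \<alpha> \<omega>) * \<bar>y\<bar>) \<and>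
            \<bar>nderiv k (K1 \<omega>) y\<bar> \<le> A k * \<omega> * exp (- (sqrt (2 - (\<alpha> \<omega>)\<^sup>2) - \<alpha> \<omega>) * \<bar>y\<bar>) \<and>
            \<bar>nderiv k (K0 \<omega>) y\<bar> \<le> A k * \<omega> * exp (- (sqrt (2 - (\<alpha> \<omega>)\<^sup>2) - \<alpha> \<omega>) * \<bar>y\<bar>)"
    if w: "\<omega> \<in> {0<..<\<omega>1}" for \<omega> k y
  proof -
    have w0: "\<omega> \<in> {0<..<\<omega>0}" using in0[OF w] .
    have "Cf k * \<omega> * exp (- (sqrt (2 - (\<alpha> \<omega>)\<^sup>2) - \<alpha> \<omega>) * \<bar>y\<bar>) \<le> A k * \<omega> * exp (- (sqrt (2 - (\<alpha> \<omega>)\<^sup>2) - \<alpha> \<omega>) * \<bar>y\<bar>)"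
      unfolding A_def using w0 by (intro mult_right_mono) auto
    then show ?thesis using Cf[OF w0, of k y] by linarith
  qed
  show ?thesis
  proof (rule exI[of _ \<omega>1], intro conjI \<omega>1_pos ballI allI impI)
    fix \<omega> h assume w: "\<omega> \<in> {0<..<\<omega>1}" and h: "schwartz h"
    have w0: "\<omega> \<in> {0<..<\<omega>0}" using in0[OF w] .
    have tb: "sqrt (2 - (\<alpha> \<omega>)\<^sup>2) - \<alpha> \<omega> \<ge> 0" using tbig[OF w] by linarith
    have ebd: "\<bar>nderiv k (K2 \<omega>) y\<bar> \<le> A k * \<omega> \<and> \<bar>nderiv k (K1 \<omega>) y\<bar> \<le> A k * \<omega> \<and> \<bar>nderiv k (K0 \<omega>) y\<bar> \<le> A k * \<omega>" for k y
    proof -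
      have "exp (- (sqrt (2 - (\<alpha> \<omega>)\<^sup>2) - \<alpha> \<omega>) * \<bar>y\<bar>) \<le> 1" using tb by (simp add: mult_nonpos_nonneg)
      then have "A k * \<omega> * exp (- (sqrt (2 - (\<alpha> \<omega>)\<^sup>2) - \<alpha> \<omega>) * \<bar>y\<bar>) \<le> A k * \<omega>"
        unfolding A_def using w0 by (intro mult_left_le) auto
      then show ?thesis using Kb[OF w, of k y] by linarith
    qed
    have sK: "smooth_fun (K2 \<omega>)" "smooth_fun (K1 \<omega>)" "smooth_fun (K0 \<omega>)" using K_smooth w0 by auto
    show "(\<integral>y. (2 * y * deriv h y + h y) * K_op (K2 \<omega>) (K1 \<omega>) (K0 \<omega>) h y \<partial>lborel)
              = 4 * (\<integral>y. (nderiv 2 h y)\<^sup>2 \<partial>lborel) + 4 * (\<integral>y. (deriv h y)\<^sup>2 \<partial>lborel)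
                + (\<integral>y. Y1 \<omega> y * (deriv h y)\<^sup>2 \<partial>lborel) + (\<integral>y. Y0 \<omega> y * (h y)\<^sup>2 \<partial>lborel)"
      unfolding Y1_def Y0_def
      by (rule identity[OF h sK]) (intro tempered_nderiv sK allI; use ebd in blast)+
  next
    fix k
    define C where "C = (2 * A k + 4 * A (Suc k) + real k * A k + 8 * A k + 2 * real k * A (k - 1))
       + (A (Suc (Suc k)) + A (Suc k) + 8 * A (Suc k) + 2 * real k * A k) / 2"
    show "\<exists>C. \<forall>\<omega>\<in>{0<..<\<omega>1}. \<forall>y.
              \<bar>nderiv k (Y1 \<omega>) y\<bar> + \<bar>nderiv k (Y0 \<omega>) y\<bar> \<le> C * \<omega> * exp (- \<bar>y\<bar>)"
    proof (intro exI[of _ C] ballI allI)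
      fix \<omega> y assume w: "\<omega> \<in> {0<..<\<omega>1}"
      have w0: "\<omega> \<in> {0<..<\<omega>0}" using in0[OF w] .
      have wp: "\<omega> > 0" using w by simp
      have sK: "smooth_fun (K2 \<omega>)" "smooth_fun (K1 \<omega>)" "smooth_fun (K0 \<omega>)" using K_smooth w0 by auto
      define g1 where "g1 k y = - 2 * nderiv k (K2 \<omega>) y - (y * nderiv (Suc k) (K2 \<omega>) y + real k * nderiv k (K2 \<omega>) y)
          + 2 * (y * nderiv k (K1 \<omega>) y + real k * nderiv (k - 1) (K1 \<omega>) y)" for k y
      define g0 where "g0 k y = (nderiv (Suc (Suc k)) (K2 \<omega>) y - nderiv (Suc k) (K1 \<omega>) y
          - 2 * (y * nderiv (Suc k) (K0 \<omega>) y + real k * nderiv k (K0 \<omega>) y)) / 2" for k y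
      have two_nz: "(2::real) \<noteq> 0" by simp
      have e1: "nderiv k (Y1 \<omega>) = g1 k"
      proof (rule nderiv_chain)
        show "g1 0 = Y1 \<omega>" by (intro ext) (simp add: g1_def Y1_def deriv_nderiv1)
        fix j x
        show "(g1 j has_real_derivative g1 (Suc j) x) (at x)"
          unfolding g1_def
          apply (rule derivative_eq_intros DERIV_nderiv sK refl)+
          apply (cases j) apply (simp_all add: algebra_simps)
          done
      qed
      have e0: "nderiv k (Y0 \<omega>) = g0 k"
      proof (rule nderiv_chain)
        show "g0 0 = Y0 \<omega>" by (intro ext) (simp add: g0_def Y0_def deriv_nderiv1 numeral_2_eq_2)
        fix j x
        show "(g0 j has_real_derivative g0 (Suc j) x) (at x)"
          unfolding g0_def
          apply (rule derivative_eq_intros DERIV_nderiv sK refl two_nz)+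
          apply (simp add: algebra_simps)
          apply (simp add: field_simps)
          done
      qed
      define M where "M = \<omega> * exp (- \<bar>y\<bar>)"
      have M0: "M \<ge> 0" unfolding M_def using wp by simp
      note tb = tbig[OF w]
      have TB: "\<And>N j. \<bar>N\<bar> \<le> A j * \<omega> * exp (- (sqrt (2 - (\<alpha> \<omega>)\<^sup>2) - \<alpha> \<omega>) * \<bar>y\<bar>) \<Longrightarrow>
          \<bar>N\<bar> \<le> A j * M \<and> \<bar>y * N\<bar> \<le> 4 * A j * M \<and> \<bar>real k * N\<bar> \<le> real k * (A j * M)"
      proof -
        fix N j assume a: "\<bar>N\<bar> \<le> A j * \<omega> * exp (- (sqrt (2 - (\<alpha> \<omega>)\<^sup>2) - \<alpha> \<omega>) * \<bar>y\<bar>)"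
        note tt = term_bounds[OF a tb wp]
        have "\<bar>real k * N\<bar> \<le> real k * (A j * M)"
          using tt(1) unfolding M_def by (simp add: abs_mult mult_left_mono)
        then show "\<bar>N\<bar> \<le> A j * M \<and> \<bar>y * N\<bar> \<le> 4 * A j * M \<and> \<bar>real k * N\<bar> \<le> real k * (A j * M)"
          using tt unfolding M_def by auto
      qed
      have b1: "\<bar>nderiv k (K2 \<omega>) y\<bar> \<le> A k * M" "\<bar>real k * nderiv k (K2 \<omega>) y\<bar> \<le> real k * (A k * M)"
        using TB Kb[OF w, of k y] by auto
      have b2: "\<bar>y * nderiv (Suc k) (K2 \<omega>) y\<bar> \<le> 4 * A (Suc k) * M"
        using TB Kb[OF w, of "Suc k" y] by auto
      have b4: "\<bar>y * nderiv k (K1 \<omega>) y\<bar> \<le> 4 * A k * M"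
        using TB Kb[OF w, of k y] by auto
      have b5: "\<bar>real k * nderiv (k - 1) (K1 \<omega>) y\<bar> \<le> real k * (A (k - 1) * M)"
        using TB Kb[OF w, of "k - 1" y] by auto
      have c1: "\<bar>nderiv (Suc (Suc k)) (K2 \<omega>) y\<bar> \<le> A (Suc (Suc k)) * M"
        using TB Kb[OF w, of "Suc (Suc k)" y] by auto
      have c2: "\<bar>nderiv (Suc k) (K1 \<omega>) y\<bar> \<le> A (Suc k) * M"
        using TB Kb[OF w, of "Suc k" y] by auto
      have c3: "\<bar>y * nderiv (Suc k) (K0 \<omega>) y\<bar> \<le> 4 * A (Suc k) * M"
        using TB Kb[OF w, of "Suc k" y] by auto
      have c4: "\<bar>real k * nderiv k (K0 \<omega>) y\<bar> \<le> real k * (A k * M)"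
        using TB Kb[OF w, of k y] by auto
      have "\<bar>g1 k y\<bar> + \<bar>g0 k y\<bar> \<le> (2 * (A k * M) + 4 * A (Suc k) * M + real k * (A k * M) + 2 * (4 * A k * M)
          + 2 * (real k * (A (k - 1) * M))) + (A (Suc (Suc k)) * M + A (Suc k) * M + 2 * (4 * A (Suc k) * M)
          + 2 * (real k * (A k * M))) / 2"
        unfolding g1_def g0_def by (rule lin_bound[OF b1(1) b2 b1(2) b4 b5 c1 c2 c3 c4])
      also have "\<dots> = C * M" by (simp add: C_def field_simps)
      finally have "\<bar>g1 k y\<bar> + \<bar>g0 k y\<bar> \<le> C * M" .
      then show "\<bar>nderiv k (Y1 \<omega>) y\<bar> + \<bar>nderiv k (Y0 \<omega>) y\<bar> \<le> C * \<omega> * exp (- \<bar>y\<bar>)"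
        unfolding e1 e0 M_def by (simp add: mult.assoc)
    qed
  qed
qed

end
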